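(* Let $X$ be a bounded anti-linear operator on $H^2(\mathbb{D})$, let $S\in\mathcal{B}(H^2(\mathbb{D}))$ be a unilateral shift, and let $U$ be a unitary on $H^2(\mathbb{D})$ with $S=U^*M_zU$ (e.g. $Uf_n=z^n$ where $\{f_n\}$ is an orthonormal basis with $Sf_n=f_{n+1}$). Then $XM_z=SX$ if and only if there exists $\theta\in H^\infty(\mathbb{D})$ such that $X=U^*M_\theta J_{H^2(\mathbb{D})}$.
   Context: $H^2(\mathbb{D})$ is the Hardy space of the unit disc; $M_z$, $M_\theta$ are multiplication operators; $H^\infty(\mathbb{D})$ is the algebra of bounded analytic functions; $J_{H^2(\mathbb{D})}(\sum a_nz^n)=\sum\bar a_nz^n$. A unilateral shift on $H^2(\mathbb{D})$ is an operator $S$ for which there is an orthonormal basis $\{f_n\}_{n\in\mathbb{Z}_+}$ with $Sf_n=f_{n+1}$ for all $n$. *)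

theory Defs
  imports "HOL-Complex_Analysis.Complex_Analysis"
begin

text \<open>H^2(D) is modelled by Taylor coefficient sequences: f = sum a_n z^n with
  sum |a_n|^2 finite.\<close>

definition H2 :: "(nat \<Rightarrow> complex) set" where
  "H2 = {a. summable (\<lambda>n. (cmod (a n))\<^sup>2)}"

definition h2_inner :: "(nat \<Rightarrow> complex) \<Rightarrow> (nat \<Rightarrow> complex) \<Rightarrow> complex" where
  "h2_inner a b = (\<Sum>n. a n * cnj (b n))"

definition h2_norm :: "(nat \<Rightarrow> complex) \<Rightarrow> real" where
  "h2_norm a = sqrt (\<Sum>n. (cmod (a n))\<^sup>2)"

definition bounded_linear_h2 :: "((nat \<Rightarrow> complex) \<Rightarrow> (nat \<Rightarrow> complex)) \<Rightarrow> bool" where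
  "bounded_linear_h2 T \<longleftrightarrow>
     (\<forall>a\<in>H2. T a \<in> H2) \<and>
     (\<forall>a\<in>H2. \<forall>b\<in>H2. T (\<lambda>n. a n + b n) = (\<lambda>n. T a n + T b n)) \<and>
     (\<forall>a\<in>H2. \<forall>c. T (\<lambda>n. c * a n) = (\<lambda>n. c * T a n)) \<and>
     (\<exists>K. \<forall>a\<in>H2. h2_norm (T a) \<le> K * h2_norm a)"

definition bounded_antilinear_h2 :: "((nat \<Rightarrow> complex) \<Rightarrow> (nat \<Rightarrow> complex)) \<Rightarrow> bool" where
  "bounded_antilinear_h2 T \<longleftrightarrow>
     (\<forall>a\<in>H2. T a \<in> H2) \<and>
     (\<forall>a\<in>H2. \<forall>b\<in>H2. T (\<lambda>n. a n + b n) = (\<lambda>n. T a n + T b n)) \<and>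
     (\<forall>a\<in>H2. \<forall>c. T (\<lambda>n. c * a n) = (\<lambda>n. cnj c * T a n)) \<and>
     (\<exists>K. \<forall>a\<in>H2. h2_norm (T a) \<le> K * h2_norm a)"

definition h2_adjoint :: "((nat \<Rightarrow> complex) \<Rightarrow> (nat \<Rightarrow> complex)) \<Rightarrow> (nat \<Rightarrow> complex) \<Rightarrow> (nat \<Rightarrow> complex)" where
  "h2_adjoint T b = (THE c. c \<in> H2 \<and> (\<forall>a\<in>H2. h2_inner (T a) b = h2_inner a c))"

definition unitary_h2 :: "((nat \<Rightarrow> complex) \<Rightarrow> (nat \<Rightarrow> complex)) \<Rightarrow> bool" where
  "unitary_h2 U \<longleftrightarrow> bounded_linear_h2 U \<and>
     (\<forall>a\<in>H2. h2_adjoint U (U a) = a) \<and> (\<forall>a\<in>H2. U (h2_adjoint U a) = a)"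

text \<open>Multiplication by z: shift of Taylor coefficients.\<close>
definition Mz :: "(nat \<Rightarrow> complex) \<Rightarrow> (nat \<Rightarrow> complex)" where
  "Mz a = (\<lambda>n. if n = 0 then 0 else a (n - 1))"

definition J_H2 :: "(nat \<Rightarrow> complex) \<Rightarrow> (nat \<Rightarrow> complex)" where
  "J_H2 a = (\<lambda>n. cnj (a n))"

definition H_infty :: "(complex \<Rightarrow> complex) set" where
  "H_infty = {\<theta>. \<theta> holomorphic_on ball 0 1 \<and> bounded (\<theta> ` ball 0 1)}"

definition taylor_coeff :: "(complex \<Rightarrow> complex) \<Rightarrow> nat \<Rightarrow> complex" where
  "taylor_coeff \<theta> k = (deriv ^^ k) \<theta> 0 / fact k"

text \<open>Multiplication by theta: Cauchy product of Taylor coefficients.\<close>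
definition M_theta :: "(complex \<Rightarrow> complex) \<Rightarrow> (nat \<Rightarrow> complex) \<Rightarrow> (nat \<Rightarrow> complex)" where
  "M_theta \<theta> a = (\<lambda>n. \<Sum>k\<le>n. taylor_coeff \<theta> k * a (n - k))"

definition unilateral_shift_h2 :: "((nat \<Rightarrow> complex) \<Rightarrow> (nat \<Rightarrow> complex)) \<Rightarrow> bool" where
  "unilateral_shift_h2 S \<longleftrightarrow> bounded_linear_h2 S \<and>
     (\<exists>f :: nat \<Rightarrow> (nat \<Rightarrow> complex).
        (\<forall>n. f n \<in> H2) \<and>
        (\<forall>m n. h2_inner (f m) (f n) = (if m = n then 1 else 0)) \<and>
        (\<forall>a\<in>H2. (\<forall>n. h2_inner a (f n) = 0) \<longrightarrow> a = (\<lambda>_. 0)) \<and>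
        (\<forall>n. S (f n) = f (Suc n)))"

end

theory Submission
  imports Defs
begin


lemma H2_iff: "a \<in> H2 \<longleftrightarrow> summable (\<lambda>n. (cmod (a n))\<^sup>2)"
  by (simp add: H2_def)

lemma H2_add: assumes "a \<in> H2" "b \<in> H2" shows "(\<lambda>n. a n + b n) \<in> H2"
proof -
  have "summable (\<lambda>n. 2 * (cmod (a n))\<^sup>2 + 2 * (cmod (b n))\<^sup>2)"
    using assms by (intro summable_add summable_mult) (auto simp: H2_iff)
  note s = this
  have le: "norm ((cmod (a n + b n))\<^sup>2) \<le> 2 * (cmod (a n))\<^sup>2 + 2 * (cmod (b n))\<^sup>2" for n
  proof -
    have "cmod (a n + b n) \<le> cmod (a n) + cmod (b n)" by (rule norm_triangle_ineq)
    hence "(cmod (a n + b n))\<^sup>2 \<le> (cmod (a n) + cmod (b n))\<^sup>2"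
      by (intro power_mono) auto
    also have "\<dots> \<le> 2 * (cmod (a n))\<^sup>2 + 2 * (cmod (b n))\<^sup>2"
    proof -
      have "(cmod (a n) + cmod (b n))\<^sup>2 = 2 * (cmod (a n))\<^sup>2 + 2 * (cmod (b n))\<^sup>2 - (cmod (a n) - cmod (b n))\<^sup>2"
        by (simp add: power2_eq_square algebra_simps)
      moreover have "(cmod (a n) - cmod (b n))\<^sup>2 \<ge> 0" by simp
      ultimately show ?thesis by linarith
    qed
    finally show ?thesis by simp
  qed
  show ?thesis unfolding H2_iff by (rule summable_comparison_test'[OF s]) (rule le)
qed

lemma H2_scale: assumes "a \<in> H2" shows "(\<lambda>n. c * a n) \<in> H2"
  using summable_mult[OF assms[unfolded H2_iff], of "(cmod c)\<^sup>2"]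
  by (simp add: H2_iff norm_mult power_mult_distrib)

lemma H2_zero: "(\<lambda>n. 0) \<in> H2" by (simp add: H2_iff)

lemma H2_finite_support: assumes "\<And>n. n > N \<Longrightarrow> a n = 0" shows "a \<in> H2"
  unfolding H2_iff
  by (rule sums_summable[OF sums_finite[of "{..N}"]]) (use assms in auto)

lemma Mz_H2: assumes "a \<in> H2" shows "Mz a \<in> H2"
proof -
  have "summable (\<lambda>n. (cmod (Mz a (Suc n)))\<^sup>2)" using assms by (simp add: Mz_def H2_iff)
  thus ?thesis unfolding H2_iff by (subst (asm) summable_Suc_iff)
qed

lemma J_H2_H2: assumes "a \<in> H2" shows "J_H2 a \<in> H2"
  using assms by (simp add: J_H2_def H2_iff)

lemma J_J [simp]: "J_H2 (J_H2 a) = a" by (simp add: J_H2_def)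
lemma J_Mz: "J_H2 (Mz a) = Mz (J_H2 a)" by (auto simp: J_H2_def Mz_def)



lemma CS_series:
  fixes f g :: "nat \<Rightarrow> real"
  assumes f: "summable (\<lambda>n. (f n)\<^sup>2)" and g: "summable (\<lambda>n. (g n)\<^sup>2)"
  shows "summable (\<lambda>n. \<bar>f n * g n\<bar>)"
    and "(\<Sum>n. \<bar>f n * g n\<bar>) \<le> sqrt (\<Sum>n. (f n)\<^sup>2) * sqrt (\<Sum>n. (g n)\<^sup>2)"
proof -
  have bnd: "(\<Sum>n<N. \<bar>f n * g n\<bar>) \<le> sqrt (\<Sum>n. (f n)\<^sup>2) * sqrt (\<Sum>n. (g n)\<^sup>2)" for N
  proof -
    have "(\<Sum>n<N. \<bar>f n\<bar> * \<bar>g n\<bar>)\<^sup>2 \<le> (\<Sum>n<N. \<bar>f n\<bar>\<^sup>2) * (\<Sum>n<N. \<bar>g n\<bar>\<^sup>2)"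
      by (rule Cauchy_Schwarz_ineq_sum)
    also have "\<dots> \<le> (\<Sum>n. (f n)\<^sup>2) * (\<Sum>n. (g n)\<^sup>2)"
      using f g by (intro mult_mono sum_le_suminf sum_nonneg suminf_nonneg) (auto intro!: sum_le_suminf)
    finally have "(\<Sum>n<N. \<bar>f n\<bar> * \<bar>g n\<bar>) \<le> sqrt ((\<Sum>n. (f n)\<^sup>2) * (\<Sum>n. (g n)\<^sup>2))"
      by (intro real_le_rsqrt) 
    thus ?thesis by (simp add: abs_mult real_sqrt_mult)
  qed
  show s: "summable (\<lambda>n. \<bar>f n * g n\<bar>)"
    by (rule summableI_nonneg_bounded[OF _ bnd]) auto
  show "(\<Sum>n. \<bar>f n * g n\<bar>) \<le> sqrt (\<Sum>n. (f n)\<^sup>2) * sqrt (\<Sum>n. (g n)\<^sup>2)"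
    by (rule suminf_le_const[OF s bnd])
qed



lemma conv_sym: "(\<Sum>k\<le>n. a k * t (n-k)) = (\<Sum>k\<le>(n::nat). t k * (a (n-k)::complex))"
  by (simp only: atMost_atLeast0, subst sum.atLeastAtMost_rev) (auto intro!: sum.cong simp: mult.commute)

definition shiftn :: "nat \<Rightarrow> (nat \<Rightarrow> complex) \<Rightarrow> nat \<Rightarrow> complex" where
  "shiftn m b = (\<lambda>i. if i < m then 0 else b (i - m))"

lemma shiftn_0 [simp]: "shiftn 0 b = b" by (simp add: shiftn_def)
lemma shiftn_Suc: "shiftn (Suc m) b = Mz (shiftn m b)"
  by (auto simp: shiftn_def Mz_def fun_eq_iff)

lemma shiftn_H2: "b \<in> H2 \<Longrightarrow> shiftn m b \<in> H2"
  by (induction m) (auto simp: shiftn_Suc intro: Mz_H2)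

definition e0 :: "nat \<Rightarrow> complex" where "e0 = (\<lambda>i. if i = 0 then 1 else 0)"

lemma e0_H2: "e0 \<in> H2" by (rule H2_finite_support[of 0]) (auto simp: e0_def)

locale commutes =
  fixes Y :: "(nat \<Rightarrow> complex) \<Rightarrow> nat \<Rightarrow> complex"
  assumes maps: "\<And>a. a \<in> H2 \<Longrightarrow> Y a \<in> H2"
    and add: "\<And>a b. a \<in> H2 \<Longrightarrow> b \<in> H2 \<Longrightarrow> Y (\<lambda>n. a n + b n) = (\<lambda>n. Y a n + Y b n)"
    and hom: "\<And>a c. a \<in> H2 \<Longrightarrow> Y (\<lambda>n. c * a n) = (\<lambda>n. c * Y a n)"
    and comm: "\<And>a. a \<in> H2 \<Longrightarrow> Y (Mz a) = Mz (Y a)"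
begin

lemma Y0: "Y (\<lambda>n. 0) = (\<lambda>n. 0)"
  using hom[OF H2_zero, of 0] by simp

lemma Y_shiftn: "b \<in> H2 \<Longrightarrow> Y (shiftn m b) = shiftn m (Y b)"
  by (induction m) (auto simp: shiftn_Suc comm shiftn_H2)

lemma Y_sum:
  assumes "finite F" "\<And>k. k \<in> F \<Longrightarrow> b k \<in> H2"
  shows "(\<lambda>i. \<Sum>k\<in>F. c k * b k i) \<in> H2 \<and> Y (\<lambda>i. \<Sum>k\<in>F. c k * b k i) = (\<lambda>i. \<Sum>k\<in>F. c k * Y (b k) i)"
  using assms
proof (induction F rule: finite_induct)
  case empty
  then show ?case using Y0 H2_zero by simp
next
  case (insert x F)
  have bx: "b x \<in> H2" using insert by auto
  have IH: "(\<lambda>i. \<Sum>k\<in>F. c k * b k i) \<in> H2" "Y (\<lambda>i. \<Sum>k\<in>F. c k * b k i) = (\<lambda>i. \<Sum>k\<in>F. c k * Y (b k) i)"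
    using insert by auto
  have eq: "(\<lambda>i. \<Sum>k\<in>insert x F. c k * b k i) = (\<lambda>i. (\<lambda>i. c x * b x i) i + (\<lambda>i. \<Sum>k\<in>F. c k * b k i) i)"
    using insert by simp
  show ?case
    unfolding eq
    using insert IH bx H2_scale[OF bx, of "c x"]
    by (auto simp: add hom H2_add)
qed

lemma Y_conv:
  assumes a: "a \<in> H2"
  shows "Y a n = (\<Sum>k\<le>n. Y e0 k * a (n - k))"
proof -
  define p where "p = (\<lambda>i. \<Sum>k\<le>n. a k * shiftn k e0 i)"
  define r' where "r' = (\<lambda>i. a (i + Suc n))"
  have r'H2: "r' \<in> H2" using a unfolding H2_iff r'_def
    by (subst summable_iff_shift) 
  have pY: "p \<in> H2" "Y p = (\<lambda>i. \<Sum>k\<le>n. a k * Y (shiftn k e0) i)"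
    using Y_sum[of "{..n}" "\<lambda>k. shiftn k e0" a] shiftn_H2[OF e0_H2] unfolding p_def by auto
  have rH2: "shiftn (Suc n) r' \<in> H2" by (rule shiftn_H2[OF r'H2])
  have p_eq: "p i = (if i \<le> n then a i else 0)" for i
  proof -
    have "p i = (\<Sum>k\<le>n. (if k = i then a k else 0))"
      unfolding p_def by (intro sum.cong) (auto simp: shiftn_def e0_def)
    thus ?thesis by (simp add: sum.delta)
  qed
  have dec: "a = (\<lambda>i. p i + shiftn (Suc n) r' i)"
    by (auto simp: fun_eq_iff p_eq shiftn_def r'_def)
  have "Y a n = Y p n + Y (shiftn (Suc n) r') n"
    by (subst dec, subst add[OF pY(1) rH2]) simp
  also have "Y (shiftn (Suc n) r') n = 0"
    unfolding Y_shiftn[OF r'H2] by (simp add: shiftn_def)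
  also have "Y p n = (\<Sum>k\<le>n. a k * Y e0 (n - k))"
    unfolding pY(2) Y_shiftn[OF e0_H2] by (intro sum.cong) (auto simp: shiftn_def)
  finally show ?thesis by (simp add: conv_sym)
qed

end



definition pser :: "(nat \<Rightarrow> complex) \<Rightarrow> complex \<Rightarrow> complex" where
  "pser t z = (\<Sum>n. t n * z ^ n)"

definition conv :: "(nat \<Rightarrow> complex) \<Rightarrow> (nat \<Rightarrow> complex) \<Rightarrow> nat \<Rightarrow> complex" where
  "conv t a = (\<lambda>n. \<Sum>k\<le>n. t k * a (n - k))"

lemma geom_sq_summable: assumes "norm (z::complex) < 1"
  shows "summable (\<lambda>n. (norm z ^ n)\<^sup>2)" "(\<lambda>n. (norm z ^ n)\<^sup>2) sums (1 / (1 - (norm z)\<^sup>2))"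
proof -
  have eq: "(\<lambda>n. (norm z ^ n)\<^sup>2) = (\<lambda>n. ((norm z)\<^sup>2) ^ n)"
    by (auto simp: power_mult[symmetric] mult.commute)
  have "(norm z)\<^sup>2 < 1" using assms by (simp add: power_less_one_iff abs_square_less_1)
  hence "(\<lambda>n. ((norm z)\<^sup>2) ^ n) sums (1 / (1 - (norm z)\<^sup>2))"
    by (intro geometric_sums) simp
  thus "(\<lambda>n. (norm z ^ n)\<^sup>2) sums (1 / (1 - (norm z)\<^sup>2))" unfolding eq .
  thus "summable (\<lambda>n. (norm z ^ n)\<^sup>2)" by (rule sums_summable)
qed

lemma H2_pser_abs:
  assumes t: "t \<in> H2" and z: "norm z < 1"
  shows "summable (\<lambda>n. norm (t n * z ^ n))"
proof -
  have "summable (\<lambda>n. \<bar>cmod (t n) * norm z ^ n\<bar>)"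
    by (rule CS_series(1)) (use t geom_sq_summable[OF z] in \<open>auto simp: H2_iff\<close>)
  thus ?thesis by (simp add: norm_mult norm_power)
qed

lemma H2_pser_sums:
  assumes t: "t \<in> H2" and z: "norm z < 1"
  shows "(\<lambda>n. t n * z ^ n) sums pser t z"
  unfolding pser_def by (rule summable_sums, rule summable_norm_cancel, rule H2_pser_abs[OF t z])

lemma H2_conv_radius:
  assumes t: "t \<in> H2"
  shows "fps_conv_radius (Abs_fps t) \<ge> 1"
  unfolding fps_conv_radius_def fps_nth_Abs_fps
proof (rule conv_radius_geI_ex')
  fix r :: real assume "0 < r" "ereal r < 1"
  hence "norm (of_real r :: complex) < 1" by simp
  thus "summable (\<lambda>n. t n * of_real r ^ n)"
    by (rule summable_norm_cancel[OF H2_pser_abs[OF t]])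
qed

lemma H2_pser_eq: "eval_fps (Abs_fps t) = pser t"
  by (simp add: fun_eq_iff eval_fps_def pser_def)

lemma ball_sub_eball:
  assumes "1 \<le> R" shows "ball (0::complex) 1 \<subseteq> eball 0 R"
proof
  fix x :: complex assume "x \<in> ball 0 1"
  hence "ereal (dist 0 x) < 1" by simp
  also note assms
  finally show "x \<in> eball 0 R" by simp
qed

lemma H2_pser_holo:
  assumes t: "t \<in> H2"
  shows "pser t holomorphic_on ball 0 1"
proof -
  have "ball (0::complex) 1 \<subseteq> eball 0 (fps_conv_radius (Abs_fps t))"
    by (rule ball_sub_eball[OF H2_conv_radius[OF t]])
  from holomorphic_on_eval_fps[OF this] show ?thesis by (simp add: H2_pser_eq)
qed

lemma H2_pser_taylor:
  assumes t: "t \<in> H2"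
  shows "taylor_coeff (pser t) k = t k"
proof -
  have "eval_fps (Abs_fps t) has_fps_expansion Abs_fps t"
  proof (rule eval_fps_has_fps_expansion)
    have "(0::ereal) < 1" by simp
    also have "1 \<le> fps_conv_radius (Abs_fps t)" by (rule H2_conv_radius[OF t])
    finally show "0 < fps_conv_radius (Abs_fps t)" .
  qed
  from fps_nth_fps_expansion[OF this, of k] show ?thesis
    by (simp add: taylor_coeff_def H2_pser_eq)
qed



lemma conv_bound:
  assumes t: "t \<in> H2"
    and K: "\<And>a. a \<in> H2 \<Longrightarrow> conv t a \<in> H2 \<and> h2_norm (conv t a) \<le> K * h2_norm a"
    and z: "norm z < 1"
  shows "cmod (pser t z) \<le> K"
proof -
  define \<rho> where "\<rho> = (norm z)\<^sup>2"
  define s where "s = 1 / (1 - \<rho>)"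
  have \<rho>1: "\<rho> < 1" "0 \<le> \<rho>" using z unfolding \<rho>_def by (simp_all add: abs_square_less_1)
  hence spos: "s > 0" unfolding s_def by simp
  define k where "k = (\<lambda>n. cnj z ^ n)"
  have ksq: "(\<lambda>n. (cmod (k n))\<^sup>2) sums s"
    using geom_sq_summable(2)[OF z] unfolding k_def s_def \<rho>_def by (simp add: norm_power)
  hence kH2: "k \<in> H2" unfolding H2_iff by (rule sums_summable)
  have kn: "h2_norm k = sqrt s" unfolding h2_norm_def using ksq by (simp add: sums_iff)
  define c where "c = conv t k"
  have cH2: "c \<in> H2" and cb: "h2_norm c \<le> K * sqrt s"
    using K[OF kH2] kn unfolding c_def by auto
  define A where "A = (\<lambda>i. t i * z ^ i)"
  define B where "B = (\<lambda>j. k j * z ^ j)"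
  have Beq: "B = (\<lambda>j. (complex_of_real \<rho>) ^ j)"
    unfolding B_def k_def \<rho>_def
    by (auto simp: fun_eq_iff power_mult_distrib[symmetric] complex_norm_square[symmetric] mult.commute)
  have Bsums: "B sums complex_of_real s"
  proof -
    have "norm (complex_of_real \<rho>) < 1" using \<rho>1 by simp
    from geometric_sums[OF this] show ?thesis unfolding Beq s_def by simp
  qed
  have Bnorm: "summable (\<lambda>j. norm (B j))"
  proof -
    have "norm \<rho> < 1" using \<rho>1 by simp
    from summable_geometric[OF this] show ?thesis unfolding Beq by (simp add: norm_power)
  qed
  have Anorm: "summable (\<lambda>j. norm (A j))" unfolding A_def by (rule H2_pser_abs[OF t z])
  have Asum: "suminf A = pser t z" unfolding A_def pser_def ..
  from Cauchy_product_sums[OF Anorm Bnorm]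
  have "(\<lambda>n. \<Sum>i\<le>n. A i * B (n - i)) sums (pser t z * complex_of_real s)"
    using Asum Bsums by (simp add: sums_iff)
  moreover have "(\<Sum>i\<le>n. A i * B (n - i)) = c n * z ^ n" for n
  proof -
    have "(\<Sum>i\<le>n. A i * B (n - i)) = (\<Sum>i\<le>n. t i * k (n - i) * z ^ n)"
    proof (intro sum.cong refl)
      fix i assume "i \<in> {..n}"
      hence "z ^ i * z ^ (n - i) = z ^ n" by (simp add: power_add[symmetric])
      thus "A i * B (n - i) = t i * k (n - i) * z ^ n"
        unfolding A_def B_def by (metis mult.assoc mult.left_commute)
    qed
    also have "\<dots> = c n * z ^ n" unfolding c_def conv_def by (simp add: sum_distrib_right)
    finally show ?thesis .
  qed
  ultimately have csums: "(\<lambda>n. c n * z ^ n) sums (pser t z * complex_of_real s)" by simp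
  have cabs: "summable (\<lambda>n. norm (c n * z ^ n))" by (rule H2_pser_abs[OF cH2 z])
  have "cmod (pser t z) * s = norm (\<Sum>n. c n * z ^ n)"
    using csums spos by (simp add: sums_iff norm_mult)
  also have "\<dots> \<le> (\<Sum>n. norm (c n * z ^ n))" by (rule summable_norm[OF cabs])
  also have "\<dots> = (\<Sum>n. \<bar>cmod (c n) * norm z ^ n\<bar>)" by (simp add: norm_mult norm_power)
  also have "\<dots> \<le> sqrt (\<Sum>n. (cmod (c n))\<^sup>2) * sqrt (\<Sum>n. (norm z ^ n)\<^sup>2)"
    by (rule CS_series(2)) (use cH2 geom_sq_summable[OF z] in \<open>auto simp: H2_iff\<close>)
  also have "(\<Sum>n. (norm z ^ n)\<^sup>2) = s"
    using geom_sq_summable(2)[OF z] unfolding s_def \<rho>_def by (simp add: sums_iff)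
  also have "sqrt (\<Sum>n. (cmod (c n))\<^sup>2) = h2_norm c" by (simp add: h2_norm_def)
  also have "h2_norm c * sqrt s \<le> K * sqrt s * sqrt s"
    using cb spos by (intro mult_right_mono) auto
  also have "\<dots> = K * s" using spos by (simp add: mult.assoc)
  finally show ?thesis using spos by simp
qed



definition om :: "nat \<Rightarrow> nat \<Rightarrow> complex" where
  "om L j = cis (2 * pi * real j / real L)"

lemma norm_om [simp]: "norm (om L j) = 1" by (simp add: om_def)

lemma orth:
  assumes L: "L > 0" and n: "n < L" and m: "m < L"
  shows "(\<Sum>j<L. om L j ^ n * cnj (om L j) ^ m) = (if n = m then of_nat L else 0)"
proof -
  define w where "w = cis (2 * pi * (real n - real m) / real L)"
  have tm: "om L j ^ n * cnj (om L j) ^ m = w ^ j" for j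
  proof -
    define x where "x = 2 * pi * real j / real L"
    have "om L j ^ n * cnj (om L j) ^ m = cis (real n * x) * cis (real m * (- x))"
    proof -
      have o: "om L j = cis x" by (simp add: om_def x_def)
      have "om L j ^ n * cnj (om L j) ^ m = cis x ^ n * cis (- x) ^ m" by (simp add: o cis_cnj)
      also have "\<dots> = cis (real n * x) * cis (real m * (- x))" by (simp only: Complex.DeMoivre)
      finally show ?thesis .
    qed
    also have "\<dots> = cis (real n * x + real m * (- x))"
      by (simp add: cis_mult)
    also have "real n * x + real m * (- x) = real j * (2 * pi * (real n - real m) / real L)"
      using L by (simp add: x_def field_simps)
    also have "cis \<dots> = w ^ j" by (simp add: w_def Complex.DeMoivre)
    finally show ?thesis .
  qed
  show ?thesis
  proof (cases "n = m")
    case True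
    hence "w = 1" by (simp add: w_def)
    have "(\<Sum>j<L. om L j ^ n * cnj (om L j) ^ m) = (\<Sum>j<L. w ^ j)" by (intro sum.cong refl tm)
    thus ?thesis using True \<open>w = 1\<close> by simp
  next
    case False
    have w1: "w \<noteq> 1"
    proof
      assume "w = 1"
      hence "cos (2 * pi * (real n - real m) / real L) = 1"
        unfolding w_def by (metis cis.sel(1) one_complex.simps(1))
      then obtain k :: int where k: "2 * pi * (real n - real m) / real L = real_of_int k * 2 * pi"
        by (auto simp: cos_one_2pi_int)
      have e: "(real n - real m) * (2 * pi) = (real_of_int k * real L) * (2 * pi)"
        using k L by (simp add: field_simps)
      have k': "real n - real m = real_of_int k * real L"
        using e mult_cancel_right[of "real n - real m" "2 * pi" "real_of_int k * real L"] by simp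
      have "\<bar>real n - real m\<bar> < real L" using n m by auto
      hence "\<bar>real_of_int k\<bar> * real L < 1 * real L" using k' by (simp add: abs_mult)
      hence "\<bar>real_of_int k\<bar> < 1" using L by (simp only: mult_less_cancel_right)
      hence "k = 0" by linarith
      thus False using k' False by simp
    qed
    have wL: "w ^ L = 1"
    proof -
      have "w ^ L = cis (real L * (2 * pi * (real n - real m) / real L))" by (simp add: w_def Complex.DeMoivre)
      also have "\<dots> = cis (2 * pi * (real n - real m))" using L by simp
      also have "\<dots> = 1" by (rule cis_multiple_2pi) (simp add: Ints_diff)
      finally show ?thesis .
    qed
    have "(\<Sum>j<L. w ^ j) = 0" using w1 wL by (simp add: geometric_sum)
    moreover have "(\<Sum>j<L. om L j ^ n * cnj (om L j) ^ m) = (\<Sum>j<L. w ^ j)" by (intro sum.cong refl tm)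
    ultimately show ?thesis using False by simp
  qed
qed

lemma cmod_sq: "complex_of_real ((cmod w)\<^sup>2) = w * cnj w"
  by (rule complex_norm_square)

lemma cmod_sq': "(complex_of_real (cmod w))\<^sup>2 = w * cnj w"
  by (metis complex_norm_square of_real_power)

lemma discrete_parseval:
  assumes L: "L > 0"
  shows "(\<Sum>j<L. (cmod (\<Sum>n<L. g n * om L j ^ n))\<^sup>2) = real L * (\<Sum>n<L. (cmod (g n))\<^sup>2)"
proof -
  have "complex_of_real (\<Sum>j<L. (cmod (\<Sum>n<L. g n * om L j ^ n))\<^sup>2)
      = (\<Sum>j<L. (\<Sum>n<L. g n * om L j ^ n) * cnj (\<Sum>m<L. g m * om L j ^ m))"
    by (simp only: of_real_sum cmod_sq)
  also have "\<dots> = (\<Sum>j<L. \<Sum>m<L. \<Sum>n<L. g n * (cnj (g m) * (om L j ^ n * cnj (om L j) ^ m)))"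
    by (simp add: sum_distrib_left sum_distrib_right cnj_sum mult_ac)
  also have "\<dots> = (\<Sum>m<L. \<Sum>j<L. \<Sum>n<L. g n * (cnj (g m) * (om L j ^ n * cnj (om L j) ^ m)))"
    by (rule sum.swap)
  also have "\<dots> = (\<Sum>m<L. \<Sum>n<L. \<Sum>j<L. g n * (cnj (g m) * (om L j ^ n * cnj (om L j) ^ m)))"
    by (intro sum.cong refl sum.swap)
  also have "\<dots> = (\<Sum>m<L. \<Sum>n<L. g n * cnj (g m) * (\<Sum>j<L. om L j ^ n * cnj (om L j) ^ m))"
    by (simp add: sum_distrib_left mult_ac)
  also have "\<dots> = (\<Sum>m<L. \<Sum>n<L. if n = m then g m * cnj (g m) * of_nat L else 0)"
    by (intro sum.cong refl) (simp add: orth[OF L])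
  also have "\<dots> = (\<Sum>m<L. g m * cnj (g m) * of_nat L)"
    by (simp add: sum.delta')
  also have "\<dots> = complex_of_real (real L * (\<Sum>n<L. (cmod (g n))\<^sup>2))"
    by (simp add: cmod_sq cmod_sq' sum_distrib_left sum_distrib_right mult.commute)
  finally show ?thesis by (simp only: of_real_eq_iff)
qed



lemma fin_cauchy:
  fixes \<phi> p :: "nat \<Rightarrow> complex"
  assumes ph: "\<And>k. k > d \<Longrightarrow> \<phi> k = 0" and pp: "\<And>j. j > D \<Longrightarrow> p j = 0"
  shows "(\<Sum>k\<le>d. \<phi> k * w ^ k) * (\<Sum>j\<le>D. p j * w ^ j) = (\<Sum>n\<le>d + D. (\<Sum>i\<le>n. \<phi> i * p (n - i)) * w ^ n)"
proof -
  define A where "A = (\<lambda>i. \<phi> i * w ^ i)"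
  define B where "B = (\<lambda>i. p i * w ^ i)"
  define C where "C = (\<lambda>n. \<Sum>i\<le>n. A i * B (n - i))"
  have As: "A sums (\<Sum>k\<le>d. A k)" by (rule sums_finite) (auto simp: A_def ph)
  have Bs: "B sums (\<Sum>k\<le>D. B k)" by (rule sums_finite) (auto simp: B_def pp)
  have An: "summable (\<lambda>k. norm (A k))"
    by (rule sums_summable[OF sums_finite[of "{..d}"]]) (auto simp: A_def ph)
  have Bn: "summable (\<lambda>k. norm (B k))"
    by (rule sums_summable[OF sums_finite[of "{..D}"]]) (auto simp: B_def pp)
  have C1: "C sums ((\<Sum>k\<le>d. A k) * (\<Sum>k\<le>D. B k))"
    using Cauchy_product_sums[OF An Bn] As Bs unfolding C_def by (simp add: sums_iff)
  have Cz: "C n = 0" if "n \<notin> {..d + D}" for n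
    unfolding C_def
  proof (intro sum.neutral ballI)
    fix i assume "i \<in> {..n}"
    show "A i * B (n - i) = 0"
    proof (cases "i \<le> d")
      case True
      hence "n - i > D" using that \<open>i \<in> {..n}\<close> by auto
      thus ?thesis by (simp add: B_def pp)
    next
      case False thus ?thesis by (simp add: A_def ph)
    qed
  qed
  have C2: "C sums (\<Sum>n\<le>d + D. C n)" by (rule sums_finite) (use Cz in auto)
  have Ceq: "C n = (\<Sum>i\<le>n. \<phi> i * p (n - i)) * w ^ n" for n
    unfolding C_def A_def B_def sum_distrib_right
  proof (intro sum.cong refl)
    fix i assume "i \<in> {..n}"
    hence "w ^ i * w ^ (n - i) = w ^ n" by (simp add: power_add[symmetric])
    thus "\<phi> i * w ^ i * (p (n - i) * w ^ (n - i)) = \<phi> i * p (n - i) * w ^ n"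
      by (metis mult.assoc mult.left_commute)
  qed
  from sums_unique2[OF C1 C2] show ?thesis by (simp add: A_def B_def Ceq)
qed

lemma FI:
  fixes \<phi> p :: "nat \<Rightarrow> complex"
  assumes ph: "\<And>k. k > d \<Longrightarrow> \<phi> k = 0" and pp: "\<And>j. j > D \<Longrightarrow> p j = 0"
    and L: "L = Suc (d + D)"
    and Bb: "\<And>j. j < L \<Longrightarrow> cmod (\<Sum>k\<le>d. \<phi> k * om L j ^ k) \<le> B"
  shows "(\<Sum>n<L. (cmod (\<Sum>i\<le>n. \<phi> i * p (n - i)))\<^sup>2) \<le> B\<^sup>2 * (\<Sum>n<L. (cmod (p n))\<^sup>2)"
proof -
  define q where "q = (\<lambda>n. \<Sum>i\<le>n. \<phi> i * p (n - i))"
  have L0: "L > 0" using L by simp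
  have Pj: "(\<Sum>n<L. p n * om L j ^ n) = (\<Sum>n\<le>D. p n * om L j ^ n)" for j
    by (rule sum.mono_neutral_right) (auto simp: L pp)
  have Qj: "(\<Sum>n<L. q n * om L j ^ n) = (\<Sum>k\<le>d. \<phi> k * om L j ^ k) * (\<Sum>n<L. p n * om L j ^ n)" for j
  proof -
    have "(\<Sum>n<L. q n * om L j ^ n) = (\<Sum>n\<le>d + D. q n * om L j ^ n)"
      by (simp add: L lessThan_Suc_atMost)
    also have "\<dots> = (\<Sum>k\<le>d. \<phi> k * om L j ^ k) * (\<Sum>n\<le>D. p n * om L j ^ n)"
      unfolding q_def by (rule fin_cauchy[OF ph pp, symmetric])
    also have "\<dots> = (\<Sum>k\<le>d. \<phi> k * om L j ^ k) * (\<Sum>n<L. p n * om L j ^ n)"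
      by (simp only: Pj)
    finally show ?thesis .
  qed
  have "real L * (\<Sum>n<L. (cmod (q n))\<^sup>2) = (\<Sum>j<L. (cmod (\<Sum>n<L. q n * om L j ^ n))\<^sup>2)"
    by (rule discrete_parseval[OF L0, symmetric])
  also have "\<dots> \<le> (\<Sum>j<L. B\<^sup>2 * (cmod (\<Sum>n<L. p n * om L j ^ n))\<^sup>2)"
  proof (intro sum_mono)
    fix j assume "j \<in> {..<L}"
    hence b: "cmod (\<Sum>k\<le>d. \<phi> k * om L j ^ k) \<le> B" using Bb by auto
    have "(cmod (\<Sum>k\<le>d. \<phi> k * om L j ^ k))\<^sup>2 \<le> B\<^sup>2"
      by (rule power_mono[OF b norm_ge_zero])
    thus "(cmod (\<Sum>n<L. q n * om L j ^ n))\<^sup>2 \<le> B\<^sup>2 * (cmod (\<Sum>n<L. p n * om L j ^ n))\<^sup>2"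
      unfolding Qj norm_mult power_mult_distrib by (intro mult_right_mono) auto
  qed
  also have "\<dots> = B\<^sup>2 * (real L * (\<Sum>n<L. (cmod (p n))\<^sup>2))"
    by (simp add: sum_distrib_left[symmetric] discrete_parseval[OF L0])
  finally have "real L * (\<Sum>n<L. (cmod (q n))\<^sup>2) \<le> real L * (B\<^sup>2 * (\<Sum>n<L. (cmod (p n))\<^sup>2))"
    by (simp add: mult_ac)
  thus ?thesis using L0 unfolding q_def by simp
qed



locale hinf =
  fixes \<theta> :: "complex \<Rightarrow> complex" and M :: real
  assumes holo: "\<theta> holomorphic_on ball 0 1"
    and bnd: "\<And>z. z \<in> ball 0 1 \<Longrightarrow> cmod (\<theta> z) \<le> M"
begin

abbreviation "t \<equiv> taylor_coeff \<theta>"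

lemma ps: assumes "norm z < 1" shows "(\<lambda>n. t n * z ^ n) sums \<theta> z"
  using holomorphic_power_series[OF holo, of z] assms by (simp add: taylor_coeff_def)

lemma absr: assumes "0 \<le> r" "r < 1" shows "summable (\<lambda>n. cmod (t n) * r ^ n)"
proof -
  define x where "x = complex_of_real ((1 + r) / 2)"
  have nx: "norm x = (1 + r) / 2" unfolding x_def norm_of_real using assms by simp
  have "norm x < 1" using assms nx by simp
  hence "summable (\<lambda>n. t n * x ^ n)" using ps sums_summable by blast
  moreover have "norm (complex_of_real r) < norm x" using assms nx by simp
  ultimately have "summable (\<lambda>n. norm (t n * (complex_of_real r) ^ n))" by (rule powser_insidea)
  thus ?thesis using assms by (simp add: norm_mult norm_power)
qed

definition eps :: "real \<Rightarrow> nat \<Rightarrow> real" where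
  "eps r d = (\<Sum>k. cmod (t (k + Suc d)) * r ^ (k + Suc d))"

definition Sr :: "(nat \<Rightarrow> complex) \<Rightarrow> nat \<Rightarrow> real \<Rightarrow> real" where
  "Sr a N r = (\<Sum>n<N. (cmod (\<Sum>k\<le>n. t k * complex_of_real r ^ k * a (n - k)))\<^sup>2)"

lemma trunc_bound:
  assumes r: "0 \<le> r" "r < 1" and z: "norm z = 1"
  shows "cmod (\<Sum>k\<le>d. t k * complex_of_real r ^ k * z ^ k) \<le> M + eps r d"
proof -
  define w where "w = complex_of_real r * z"
  have w1: "norm w < 1" using r z by (simp add: w_def norm_mult)
  define f where "f = (\<lambda>k. t k * w ^ k)"
  have nf: "norm (f k) = cmod (t k) * r ^ k" for k using r z by (simp add: f_def w_def norm_mult norm_power)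
  have fs: "f sums \<theta> w" unfolding f_def by (rule ps[OF w1])
  have sf: "summable f" using fs by (rule sums_summable)
  have snt: "summable (\<lambda>n. norm (f (n + Suc d)))"
    unfolding nf using absr[OF r] by (subst summable_iff_shift[where k = "Suc d"])
  have split: "\<theta> w = (\<Sum>n. f (n + Suc d)) + (\<Sum>k<Suc d. f k)"
    using suminf_split_initial_segment[OF sf, of "Suc d"] fs by (simp add: sums_iff)
  have eq: "(\<Sum>k\<le>d. t k * complex_of_real r ^ k * z ^ k) = (\<Sum>k<Suc d. f k)"
    unfolding lessThan_Suc_atMost f_def w_def by (simp add: power_mult_distrib mult.assoc)
  have "cmod (\<Sum>k<Suc d. f k) = cmod (\<theta> w - (\<Sum>n. f (n + Suc d)))" using split by simp
  also have "\<dots> \<le> cmod (\<theta> w) + cmod (\<Sum>n. f (n + Suc d))" by (rule norm_triangle_ineq4)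
  also have "cmod (\<theta> w) \<le> M" using bnd w1 by simp
  also have "cmod (\<Sum>n. f (n + Suc d)) \<le> (\<Sum>n. norm (f (n + Suc d)))" by (rule summable_norm[OF snt])
  also have "\<dots> = eps r d" unfolding eps_def nf ..
  finally show ?thesis unfolding eq by simp
qed

lemma step1:
  assumes r: "0 \<le> r" "r < 1" and a: "a \<in> H2" and dN: "N \<le> d"
  shows "Sr a N r \<le> (M + eps r d)\<^sup>2 * (\<Sum>n. (cmod (a n))\<^sup>2)"
proof -
  define \<phi> where "\<phi> = (\<lambda>k. if k \<le> d then t k * complex_of_real r ^ k else 0)"
  define p where "p = (\<lambda>j. if j \<le> N then a j else 0)"
  define L where "L = Suc (d + N)"
  have ph: "\<And>k. k > d \<Longrightarrow> \<phi> k = 0" by (simp add: \<phi>_def)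
  have pp: "\<And>j. j > N \<Longrightarrow> p j = 0" by (simp add: p_def)
  have Bb: "cmod (\<Sum>k\<le>d. \<phi> k * om L j ^ k) \<le> M + eps r d" for j
  proof -
    have "(\<Sum>k\<le>d. \<phi> k * om L j ^ k) = (\<Sum>k\<le>d. t k * complex_of_real r ^ k * om L j ^ k)"
      by (intro sum.cong) (auto simp: \<phi>_def)
    thus ?thesis using trunc_bound[OF r norm_om] by simp
  qed
  have fi: "(\<Sum>n<L. (cmod (\<Sum>i\<le>n. \<phi> i * p (n - i)))\<^sup>2) \<le> (M + eps r d)\<^sup>2 * (\<Sum>n<L. (cmod (p n))\<^sup>2)"
    by (rule FI[OF ph pp L_def Bb])
  have "Sr a N r = (\<Sum>n<N. (cmod (\<Sum>i\<le>n. \<phi> i * p (n - i)))\<^sup>2)"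
    unfolding Sr_def
  proof (intro sum.cong refl)
    fix n assume "n \<in> {..<N}"
    hence "(\<Sum>k\<le>n. t k * complex_of_real r ^ k * a (n - k)) = (\<Sum>i\<le>n. \<phi> i * p (n - i))"
      using dN by (intro sum.cong) (auto simp: \<phi>_def p_def)
    thus "(cmod (\<Sum>k\<le>n. t k * complex_of_real r ^ k * a (n - k)))\<^sup>2 = (cmod (\<Sum>i\<le>n. \<phi> i * p (n - i)))\<^sup>2"
      by simp
  qed
  also have "\<dots> \<le> (\<Sum>n<L. (cmod (\<Sum>i\<le>n. \<phi> i * p (n - i)))\<^sup>2)"
    by (rule sum_mono2) (auto simp: L_def)
  also note fi
  also have "(\<Sum>n<L. (cmod (p n))\<^sup>2) \<le> (\<Sum>n. (cmod (a n))\<^sup>2)"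
  proof -
    have "(\<Sum>n<L. (cmod (p n))\<^sup>2) \<le> (\<Sum>n<L. (cmod (a n))\<^sup>2)"
      by (intro sum_mono) (auto simp: p_def)
    also have "\<dots> \<le> (\<Sum>n. (cmod (a n))\<^sup>2)"
      using a by (intro sum_le_suminf) (auto simp: H2_iff)
    finally show ?thesis .
  qed
  hence "(M + eps r d)\<^sup>2 * (\<Sum>n<L. (cmod (p n))\<^sup>2) \<le> (M + eps r d)\<^sup>2 * (\<Sum>n. (cmod (a n))\<^sup>2)"
    by (intro mult_left_mono) auto
  finally show ?thesis .
qed

lemma eps_lim: assumes r: "0 \<le> r" "r < 1" shows "eps r \<longlonglongrightarrow> 0"
proof -
  define T where "T = (\<lambda>k. cmod (t k) * r ^ k)"
  have sT: "summable T" unfolding T_def by (rule absr[OF r])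
  have e: "eps r d = suminf T - (\<Sum>k<Suc d. T k)" for d
    using suminf_split_initial_segment[OF sT, of "Suc d"] unfolding eps_def T_def by simp
  have "(\<lambda>d. suminf T - (\<Sum>k<Suc d. T k)) \<longlonglongrightarrow> suminf T - suminf T"
    by (intro tendsto_intros LIMSEQ_Suc[OF summable_LIMSEQ[OF sT]])
  thus ?thesis unfolding e[abs_def] by simp
qed

lemma step2:
  assumes r: "0 \<le> r" "r < 1" and a: "a \<in> H2"
  shows "Sr a N r \<le> M\<^sup>2 * (\<Sum>n. (cmod (a n))\<^sup>2)"
proof -
  have "(\<lambda>d. (M + eps r d)\<^sup>2 * (\<Sum>n. (cmod (a n))\<^sup>2)) \<longlonglongrightarrow> (M + 0)\<^sup>2 * (\<Sum>n. (cmod (a n))\<^sup>2)"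
    by (intro tendsto_intros eps_lim[OF r])
  moreover have "\<exists>N0. \<forall>d\<ge>N0. Sr a N r \<le> (M + eps r d)\<^sup>2 * (\<Sum>n. (cmod (a n))\<^sup>2)"
    using step1[OF r a] by blast
  ultimately show ?thesis by (simp add: LIMSEQ_le_const)
qed

lemma step3:
  assumes a: "a \<in> H2"
  shows "(\<Sum>n<N. (cmod (conv t a n))\<^sup>2) \<le> M\<^sup>2 * (\<Sum>n. (cmod (a n))\<^sup>2)"
proof -
  define rr where "rr = (\<lambda>j::nat. 1 + - inverse (real (Suc j)))"
  have rr: "0 \<le> rr j" "rr j < 1" for j
    unfolding rr_def by (auto simp: field_simps)
  have rl: "rr \<longlonglongrightarrow> 1"
    unfolding rr_def by (rule LIMSEQ_inverse_real_of_nat_add_minus)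
  have "(\<lambda>j. Sr a N (rr j)) \<longlonglongrightarrow> Sr a N 1"
    unfolding Sr_def by (intro tendsto_intros rl)
  moreover have "\<exists>N0. \<forall>j\<ge>N0. Sr a N (rr j) \<le> M\<^sup>2 * (\<Sum>n. (cmod (a n))\<^sup>2)"
    using step2[OF rr a] by blast
  ultimately have "Sr a N 1 \<le> M\<^sup>2 * (\<Sum>n. (cmod (a n))\<^sup>2)" by (rule LIMSEQ_le_const2)
  thus ?thesis by (simp add: Sr_def conv_def)
qed

lemma mult_H2: assumes a: "a \<in> H2" shows "conv t a \<in> H2"
  unfolding H2_iff
  by (rule summableI_nonneg_bounded[OF _ step3[OF a]]) auto

end



lemma conv_Mz: "conv t (Mz b) = Mz (conv t b)"
proof
  fix n show "conv t (Mz b) n = Mz (conv t b) n"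
  proof (cases n)
    case 0 thus ?thesis by (simp add: conv_def Mz_def)
  next
    case (Suc m)
    have "conv t (Mz b) (Suc m) = (\<Sum>k\<le>m. t k * Mz b (Suc m - k)) + t (Suc m) * Mz b 0"
      by (simp add: conv_def)
    also have "(\<Sum>k\<le>m. t k * Mz b (Suc m - k)) = (\<Sum>k\<le>m. t k * b (m - k))"
      by (intro sum.cong) (auto simp: Mz_def Suc_diff_le)
    finally show ?thesis using Suc by (simp add: conv_def Mz_def)
  qed
qed

lemma M_theta_conv: "M_theta \<theta> = conv (taylor_coeff \<theta>)"
  by (simp add: fun_eq_iff M_theta_def conv_def)

lemma h2_norm_nonneg: "a \<in> H2 \<Longrightarrow> h2_norm a \<ge> 0" by (simp add: h2_norm_def H2_iff suminf_nonneg)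

lemma h2_norm_J: "h2_norm (J_H2 a) = h2_norm a" by (simp add: h2_norm_def J_H2_def)

lemma bound_nonneg:
  assumes "\<forall>a\<in>H2. h2_norm (T a) \<le> K * h2_norm a"
  shows "\<forall>a\<in>H2. h2_norm (T a) \<le> max K 0 * h2_norm a"
proof
  fix a assume "a \<in> H2"
  hence "h2_norm (T a) \<le> K * h2_norm a" using assms by auto
  also have "\<dots> \<le> max K 0 * h2_norm a" using \<open>a \<in> H2\<close> by (intro mult_right_mono) (auto simp: h2_norm_nonneg)
  finally show "h2_norm (T a) \<le> max K 0 * h2_norm a" .
qed

lemma J_add: "J_H2 (\<lambda>n. a n + b n) = (\<lambda>n. J_H2 a n + J_H2 b n)" by (simp add: J_H2_def)
lemma J_scale: "J_H2 (\<lambda>n. c * a n) = (\<lambda>n. cnj c * J_H2 a n)" by (simp add: J_H2_def)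

theorem proposition10p3:
  assumes X: "bounded_antilinear_h2 X"
    and S: "unilateral_shift_h2 S"
    and U: "unitary_h2 U"
    and SU: "\<forall>a\<in>H2. S a = h2_adjoint U (Mz (U a))"
  shows "(\<forall>a\<in>H2. X (Mz a) = S (X a)) \<longleftrightarrow>
         (\<exists>\<theta>\<in>H_infty. \<forall>a\<in>H2. X a = h2_adjoint U (M_theta \<theta> (J_H2 a)))"
proof -
  have Xm: "\<And>a. a \<in> H2 \<Longrightarrow> X a \<in> H2"
    and Xa: "\<And>a b. a \<in> H2 \<Longrightarrow> b \<in> H2 \<Longrightarrow> X (\<lambda>n. a n + b n) = (\<lambda>n. X a n + X b n)"
    and Xh: "\<And>a c. a \<in> H2 \<Longrightarrow> X (\<lambda>n. c * a n) = (\<lambda>n. cnj c * X a n)"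
    using X unfolding bounded_antilinear_h2_def by auto
  obtain KX where KX: "\<forall>a\<in>H2. h2_norm (X a) \<le> KX * h2_norm a"
    using X unfolding bounded_antilinear_h2_def by auto
  have UL: "bounded_linear_h2 U" and UU: "\<And>a. a \<in> H2 \<Longrightarrow> h2_adjoint U (U a) = a"
    and UU2: "\<And>a. a \<in> H2 \<Longrightarrow> U (h2_adjoint U a) = a"
    using U unfolding unitary_h2_def by auto
  have Um: "\<And>a. a \<in> H2 \<Longrightarrow> U a \<in> H2"
    and Ua: "\<And>a b. a \<in> H2 \<Longrightarrow> b \<in> H2 \<Longrightarrow> U (\<lambda>n. a n + b n) = (\<lambda>n. U a n + U b n)"
    and Uh: "\<And>a c. a \<in> H2 \<Longrightarrow> U (\<lambda>n. c * a n) = (\<lambda>n. c * U a n)"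
    using UL unfolding bounded_linear_h2_def by auto
  obtain KU where KU: "\<forall>a\<in>H2. h2_norm (U a) \<le> KU * h2_norm a"
    using UL unfolding bounded_linear_h2_def by auto
  show ?thesis
  proof
    assume comm: "\<forall>a\<in>H2. X (Mz a) = S (X a)"
    define Y where "Y = (\<lambda>a. U (X (J_H2 a)))"
    have Ym: "Y a \<in> H2" if "a \<in> H2" for a
      unfolding Y_def using that by (intro Um Xm J_H2_H2)
    interpret commutes Y
    proof
      fix a b assume a: "a \<in> H2" and b: "b \<in> H2"
      show "Y (\<lambda>n. a n + b n) = (\<lambda>n. Y a n + Y b n)"
        unfolding Y_def J_add using a b by (simp add: Xa J_H2_H2 Ua Xm)
    next
      fix a c assume a: "a \<in> H2"
      show "Y (\<lambda>n. c * a n) = (\<lambda>n. c * Y a n)"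
        unfolding Y_def J_scale using a by (simp add: Xh J_H2_H2 Uh Xm)
    next
      fix a assume a: "a \<in> H2"
      have "Y (Mz a) = U (S (X (J_H2 a)))"
        unfolding Y_def J_Mz using comm a J_H2_H2 by simp
      also have "\<dots> = U (h2_adjoint U (Mz (U (X (J_H2 a)))))"
        using SU a by (simp add: Xm J_H2_H2)
      also have "\<dots> = Mz (Y a)"
        unfolding Y_def using a by (intro UU2 Mz_H2 Um Xm J_H2_H2)
      finally show "Y (Mz a) = Mz (Y a)" .
    qed (rule Ym)
    define t where "t = Y e0"
    have tH2: "t \<in> H2" unfolding t_def by (rule Ym[OF e0_H2])
    have Yc: "Y a = conv t a" if "a \<in> H2" for a
      using Y_conv[OF that] by (simp add: fun_eq_iff conv_def t_def)
    define KY where "KY = max KU 0 * max KX 0"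
    have KYb: "conv t a \<in> H2 \<and> h2_norm (conv t a) \<le> KY * h2_norm a" if a: "a \<in> H2" for a
    proof -
      have "h2_norm (Y a) \<le> max KU 0 * h2_norm (X (J_H2 a))"
        using bound_nonneg[OF KU] a unfolding Y_def by (simp add: Xm J_H2_H2)
      also have "\<dots> \<le> max KU 0 * (max KX 0 * h2_norm (J_H2 a))"
        using bound_nonneg[OF KX] a by (intro mult_left_mono) (auto simp: J_H2_H2)
      finally show ?thesis using Yc[OF a] Ym[OF a] by (simp add: h2_norm_J KY_def mult.assoc)
    qed
    define \<theta> where "\<theta> = pser t"
    have bd: "cmod (\<theta> z) \<le> KY" if "z \<in> ball 0 1" for z
      unfolding \<theta>_def by (rule conv_bound[OF tH2 KYb]) (use that in auto)
    have "\<theta> \<in> H_infty"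
      unfolding H_infty_def
    proof (intro CollectI conjI)
      show "\<theta> holomorphic_on ball 0 1" unfolding \<theta>_def by (rule H2_pser_holo[OF tH2])
      show "bounded (\<theta> ` ball 0 1)" unfolding bounded_iff using bd by blast
    qed
    moreover have "X a = h2_adjoint U (M_theta \<theta> (J_H2 a))" if a: "a \<in> H2" for a
    proof -
      have tc: "taylor_coeff \<theta> = t" unfolding \<theta>_def by (simp add: fun_eq_iff H2_pser_taylor[OF tH2])
      have "M_theta \<theta> (J_H2 a) = Y (J_H2 a)"
        unfolding M_theta_conv tc using Yc[OF J_H2_H2[OF a]] by simp
      also have "\<dots> = U (X a)" by (simp add: Y_def)
      finally show ?thesis using UU[OF Xm[OF a]] by simp
    qed
    ultimately show "\<exists>\<theta>\<in>H_infty. \<forall>a\<in>H2. X a = h2_adjoint U (M_theta \<theta> (J_H2 a))" by blast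
  next
    assume "\<exists>\<theta>\<in>H_infty. \<forall>a\<in>H2. X a = h2_adjoint U (M_theta \<theta> (J_H2 a))"
    then obtain \<theta> where th: "\<theta> \<in> H_infty" and Xe: "\<And>a. a \<in> H2 \<Longrightarrow> X a = h2_adjoint U (M_theta \<theta> (J_H2 a))"
      by blast
    have holo: "\<theta> holomorphic_on ball 0 1" and bdd: "bounded (\<theta> ` ball 0 1)"
      using th unfolding H_infty_def by auto
    obtain M where M: "\<And>z. z \<in> ball 0 1 \<Longrightarrow> cmod (\<theta> z) \<le> M"
      using bdd unfolding bounded_iff by blast
    interpret hinf \<theta> M by standard (use holo M in auto)
    show "\<forall>a\<in>H2. X (Mz a) = S (X a)"
    proof
      fix a assume a: "a \<in> H2"
      define b where "b = M_theta \<theta> (J_H2 a)"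
      have bH2: "b \<in> H2" unfolding b_def M_theta_conv by (rule mult_H2[OF J_H2_H2[OF a]])
      have "X (Mz a) = h2_adjoint U (M_theta \<theta> (J_H2 (Mz a)))" by (rule Xe[OF Mz_H2[OF a]])
      also have "\<dots> = h2_adjoint U (Mz b)" unfolding b_def J_Mz M_theta_conv conv_Mz ..
      also have "\<dots> = h2_adjoint U (Mz (U (X a)))"
        using Xe[OF a] UU2[OF bH2] unfolding b_def by simp
      also have "\<dots> = S (X a)" using SU Xm[OF a] by simp
      finally show "X (Mz a) = S (X a)" .
    qed
  qed
qed


end
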